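(* Let $S_X,S_Y$ be finite nonempty action sets, $\varphi:S_X\times S_Y\to\mathbb{R}$ and $\lambda\in[0,1]$. If there exists a $(\varphi,\lambda)$-autocratic behavioral strategy for $X$, then for every $\lambda^*\in[\lambda,1]$ there exists a two-point reactive learning strategy for $X$ that is $(\varphi,\lambda^* )$-autocratic.
   Context: Two players $X,Y$ play a repeated game with finite action sets $S_X,S_Y$; $\Delta(S)$ denotes the probability distributions on $S$. $\varphi(\tau_X,s_Y)=\mathbb{E}_{s_X\sim\tau_X}[\varphi(s_X,s_Y)]$. Histories: $\mathcal{H}=\bigcup_{T\ge0}(S_X\times S_Y)^T$; behavioral strategies are maps $\sigma:\mathcal{H}\to\Delta(S)$; players independently draw actions each round from their strategies evaluated at the history of realized action pairs, with $\mathbb{E}_{\sigma_X,\sigma_Y}$ the expectation over the resulting play. For $\lambda\in[0,1)$, $\sigma_X$ is $(\varphi,\lambda)$-autocratic if for every behavioral strategy $\sigma_Y$ of $Y$, $\mathbb{E}_{\sigma_X,\sigma_Y}\big[(1-\lambda)\sum_{t\ge0}\lambda^t\varphi(s_X^t,s_Y^t)\big]=0$; $\sigma_X$ is $(\varphi,1)$-autocratic if for every behavioral strategy $\sigma_Y$ of $Y$ the limit $\lim_{T\to\infty}\frac1{T+1}\sum_{t=0}^T\mathbb{E}_{\sigma_X,\sigma_Y}[\varphi(s_X^t,s_Y^t)]$ exists and equals $0$. A reactive learning strategy $(\sigma_X^0,\sigma_X^* )$, $\sigma_X^0\in\Delta(S_X)$, $\sigma_X^*:\Delta(S_X)\times S_Y\to\Delta(S_X)$,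 plays $\tau_X^0=\sigma_X^0$ in round $0$ and $\tau_X^{t+1}=\sigma_X^*[\tau_X^t,s_Y^t]$ in round $t+1$ ($s_Y^t$ being $Y$'s realized action in round $t$). It is two-point if there exist $\tau_X^\pm\in\Delta(S_X)$, $p_0\in[0,1]$, $p^*:[0,1]\times S_Y\to[0,1]$ with $\sigma_X^0=p_0\tau_X^++(1-p_0)\tau_X^-$ and $\sigma_X^*[p\tau_X^++(1-p)\tau_X^-,s_Y]=p^*[p,s_Y]\tau_X^++(1-p^*[p,s_Y])\tau_X^-$ for all $p\in[0,1]$, $s_Y\in S_Y$. *)

theory Defs
  imports "HOL-Probability.Probability"
begin

text \<open>Histories are lists of realized action pairs in chronological order
  (round 0 first). Behavioral strategies map histories to distributions.\<close>

type_synonym ('x, 'y) history = "('x \<times> 'y) list"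

fun play_pmf :: "(('x, 'y) history \<Rightarrow> 'x pmf) \<Rightarrow> (('x, 'y) history \<Rightarrow> 'y pmf)
                  \<Rightarrow> nat \<Rightarrow> ('x, 'y) history pmf" where
  "play_pmf \<sigma>X \<sigma>Y 0 = return_pmf []"
| "play_pmf \<sigma>X \<sigma>Y (Suc t) =
     bind_pmf (play_pmf \<sigma>X \<sigma>Y t) (\<lambda>h.
     bind_pmf (\<sigma>X h) (\<lambda>a.
     bind_pmf (\<sigma>Y h) (\<lambda>b. return_pmf (h @ [(a, b)]))))"

definition stage_exp :: "('x \<Rightarrow> 'y \<Rightarrow> real) \<Rightarrow> (('x, 'y) history \<Rightarrow> 'x pmf)
                          \<Rightarrow> (('x, 'y) history \<Rightarrow> 'y pmf) \<Rightarrow> nat \<Rightarrow> real" where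
  "stage_exp \<phi> \<sigma>X \<sigma>Y t =
     measure_pmf.expectation (play_pmf \<sigma>X \<sigma>Y (Suc t)) (\<lambda>h. case last h of (a, b) \<Rightarrow> \<phi> a b)"

text \<open>For lambda < 1 the expectation of the
  discounted sum is written as the discounted sum of the stage expectations
  (equal by dominated convergence, since phi is bounded).\<close>
definition autocratic :: "('x \<Rightarrow> 'y \<Rightarrow> real) \<Rightarrow> real \<Rightarrow> (('x, 'y) history \<Rightarrow> 'x pmf) \<Rightarrow> bool" where
  "autocratic \<phi> lam \<sigma>X \<longleftrightarrow>
     (if lam < 1 then
        (\<forall>\<sigma>Y :: ('x, 'y) history \<Rightarrow> 'y pmf.
           (1 - lam) * (\<Sum>t. lam ^ t * stage_exp \<phi> \<sigma>X \<sigma>Y t) = 0)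
      else
        (\<forall>\<sigma>Y :: ('x, 'y) history \<Rightarrow> 'y pmf.
           (\<lambda>T. (\<Sum>t\<le>T. stage_exp \<phi> \<sigma>X \<sigma>Y t) / real (T + 1)) \<longlonglongrightarrow> 0))"

definition reactive_strategy :: "'x pmf \<Rightarrow> ('x pmf \<Rightarrow> 'y \<Rightarrow> 'x pmf) \<Rightarrow> ('x, 'y) history \<Rightarrow> 'x pmf" where
  "reactive_strategy \<sigma>0 \<sigma>s h = foldl (\<lambda>\<tau> ab. \<sigma>s \<tau> (snd ab)) \<sigma>0 h"

definition mix_pmf :: "real \<Rightarrow> 'x pmf \<Rightarrow> 'x pmf \<Rightarrow> 'x pmf" where
  "mix_pmf p \<tau>p \<tau>m = bind_pmf (bernoulli_pmf p) (\<lambda>c. if c then \<tau>p else \<tau>m)"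

definition two_point :: "'x pmf \<Rightarrow> ('x pmf \<Rightarrow> 'y \<Rightarrow> 'x pmf) \<Rightarrow> bool" where
  "two_point \<sigma>0 \<sigma>s \<longleftrightarrow>
     (\<exists>(\<tau>p :: 'x pmf) (\<tau>m :: 'x pmf) (p0 :: real) (ps :: real \<Rightarrow> 'y \<Rightarrow> real).
        p0 \<in> {0..1} \<and> (\<forall>p\<in>{0..1}. \<forall>b. ps p b \<in> {0..1}) \<and>
        \<sigma>0 = mix_pmf p0 \<tau>p \<tau>m \<and>
        (\<forall>p\<in>{0..1}. \<forall>b. \<sigma>s (mix_pmf p \<tau>p \<tau>m) b = mix_pmf (ps p b) \<tau>p \<tau>m))"

end

theory Submission
  imports Defs
begin



lemma finite_set_bind_pmf:
  "finite (set_pmf p) \<Longrightarrow> (\<And>x. x \<in> set_pmf p \<Longrightarrow> finite (set_pmf (f x))) \<Longrightarrow> finite (set_pmf (bind_pmf p f))"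
  by (simp add: set_bind_pmf)

lemma finite_play:
  fixes \<sigma>X :: "('x::finite, 'y::finite) history \<Rightarrow> 'x pmf"
  shows "finite (set_pmf (play_pmf \<sigma>X \<sigma>Y t))"
  by (induction t) (auto intro!: finite_set_bind_pmf)

lemma length_play: "h \<in> set_pmf (play_pmf \<sigma>X \<sigma>Y t) \<Longrightarrow> length h = t"
  by (induction t arbitrary: h) (auto simp: set_bind_pmf)

lemma E_finite:
  fixes f :: "'a \<Rightarrow> real"
  assumes "finite (set_pmf p)"
  shows "measure_pmf.expectation p f = (\<Sum>a\<in>set_pmf p. pmf p a * f a)"
  using assms by (subst integral_measure_pmf_real[of "set_pmf p"]) (auto simp: mult.commute)

lemma E_UNIV:
  fixes f :: "'a::finite \<Rightarrow> real"
  shows "measure_pmf.expectation p f = (\<Sum>a\<in>UNIV. pmf p a * f a)"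
  by (subst integral_measure_pmf_real[of UNIV]) (auto simp: mult.commute)

lemma E_bind:
  fixes h :: "'b \<Rightarrow> real"
  assumes "finite (set_pmf p)" "\<And>x. x \<in> set_pmf p \<Longrightarrow> finite (set_pmf (f x))"
  shows "measure_pmf.expectation (bind_pmf p f) h = (\<Sum>a\<in>set_pmf p. pmf p a * measure_pmf.expectation (f a) h)"
  using pmf_expectation_bind[of "set_pmf p" f p h] assms by simp

lemma sum_set_pmf_UNIV:
  fixes g :: "'a::finite \<Rightarrow> real"
  shows "(\<Sum>a\<in>set_pmf p. pmf p a * g a) = (\<Sum>a\<in>UNIV. pmf p a * g a)"
  by (rule sum.mono_neutral_left) (auto simp: set_pmf_eq)

lemma E_play_Suc:
  fixes \<sigma>X :: "('x::finite, 'y::finite) history \<Rightarrow> 'x pmf" and F :: "('x,'y) history \<Rightarrow> real"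
  shows "measure_pmf.expectation (play_pmf \<sigma>X \<sigma>Y (Suc t)) F =
    measure_pmf.expectation (play_pmf \<sigma>X \<sigma>Y t)
      (\<lambda>h. \<Sum>x\<in>UNIV. \<Sum>y\<in>UNIV. pmf (\<sigma>X h) x * pmf (\<sigma>Y h) y * F (h @ [(x,y)]))"
proof -
  have "measure_pmf.expectation (play_pmf \<sigma>X \<sigma>Y (Suc t)) F =
     (\<Sum>h\<in>set_pmf (play_pmf \<sigma>X \<sigma>Y t). pmf (play_pmf \<sigma>X \<sigma>Y t) h *
        (\<Sum>x\<in>UNIV. pmf (\<sigma>X h) x * (\<Sum>y\<in>UNIV. pmf (\<sigma>Y h) y * F (h @ [(x,y)]))))"
    by (simp add: E_bind finite_play finite_set_bind_pmf sum_set_pmf_UNIV)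
  also have "\<dots> = measure_pmf.expectation (play_pmf \<sigma>X \<sigma>Y t)
      (\<lambda>h. \<Sum>x\<in>UNIV. \<Sum>y\<in>UNIV. pmf (\<sigma>X h) x * pmf (\<sigma>Y h) y * F (h @ [(x,y)]))"
    by (simp add: E_finite finite_play sum_distrib_left mult.assoc)
  finally show ?thesis .
qed

lemma stage_formula:
  fixes \<sigma>X :: "('x::finite, 'y::finite) history \<Rightarrow> 'x pmf"
  shows "stage_exp \<phi> \<sigma>X \<sigma>Y t = measure_pmf.expectation (play_pmf \<sigma>X \<sigma>Y t)
      (\<lambda>h. \<Sum>x\<in>UNIV. \<Sum>y\<in>UNIV. pmf (\<sigma>X h) x * pmf (\<sigma>Y h) y * \<phi> x y)"
  unfolding stage_exp_def by (subst E_play_Suc) simp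




lemma E_linear:
  fixes f g :: "'a \<Rightarrow> real"
  assumes "finite (set_pmf p)"
  shows "measure_pmf.expectation p (\<lambda>h. a * f h + b * g h) =
     a * measure_pmf.expectation p f + b * measure_pmf.expectation p g"
  using assms by (simp add: E_finite sum.distrib sum_distrib_left algebra_simps)

lemma E_bound:
  fixes f :: "'a \<Rightarrow> real"
  assumes "\<And>h. \<bar>f h\<bar> \<le> B"
  shows "\<bar>measure_pmf.expectation p f\<bar> \<le> B"
proof -
  have "\<bar>measure_pmf.expectation p f\<bar> \<le> measure_pmf.expectation p (\<lambda>h. \<bar>f h\<bar>)"
    by (rule integral_abs_bound)
  also have "\<dots> \<le> B"
    using assms by (intro measure_pmf.integral_le_const) (auto intro!: measure_pmf.integrable_const_bound[where B=B])
  finally show ?thesis .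
qed

lemma suff:
  fixes \<sigma> :: "('x::finite, 'y::finite) history \<Rightarrow> 'x pmf" and \<phi> :: "'x \<Rightarrow> 'y \<Rightarrow> real"
  assumes l: "0 \<le> l" "l \<le> 1" and \<kappa>: "\<kappa> > 0"
    and bnd: "\<And>h. \<bar>G h\<bar> \<le> B"
    and G0: "l < 1 \<Longrightarrow> G [] = 0"
    and ident: "\<And>h y. (\<Sum>x\<in>UNIV. pmf (\<sigma> h) x * (\<kappa> * \<phi> x y + l * G (h @ [(x,y)]))) = G h"
  shows "autocratic \<phi> l \<sigma>"
proof -
  {
    fix \<sigma>Y :: "('x,'y) history \<Rightarrow> 'y pmf"
    define e where "e t = measure_pmf.expectation (play_pmf \<sigma> \<sigma>Y t) G" for t
    have step: "\<kappa> * stage_exp \<phi> \<sigma> \<sigma>Y t = e t - l * e (Suc t)" for t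
    proof -
      have "\<kappa> * stage_exp \<phi> \<sigma> \<sigma>Y t + l * e (Suc t) =
        measure_pmf.expectation (play_pmf \<sigma> \<sigma>Y t)
          (\<lambda>h. \<kappa> * (\<Sum>x\<in>UNIV. \<Sum>y\<in>UNIV. pmf (\<sigma> h) x * pmf (\<sigma>Y h) y * \<phi> x y)
             + l * (\<Sum>x\<in>UNIV. \<Sum>y\<in>UNIV. pmf (\<sigma> h) x * pmf (\<sigma>Y h) y * G (h @ [(x,y)])))"
        unfolding e_def stage_formula
        by (subst E_play_Suc, subst E_linear) (simp_all add: finite_play)
      also have "\<dots> = e t"
        unfolding e_def
      proof (rule Bochner_Integration.integral_cong[OF refl])
        fix h
        have "\<kappa> * (\<Sum>x\<in>UNIV. \<Sum>y\<in>UNIV. pmf (\<sigma> h) x * pmf (\<sigma>Y h) y * \<phi> x y)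
             + l * (\<Sum>x\<in>UNIV. \<Sum>y\<in>UNIV. pmf (\<sigma> h) x * pmf (\<sigma>Y h) y * G (h @ [(x,y)]))
            = (\<Sum>y\<in>UNIV. pmf (\<sigma>Y h) y * (\<Sum>x\<in>UNIV. pmf (\<sigma> h) x * (\<kappa> * \<phi> x y + l * G (h @ [(x,y)]))))"
        proof -
          have "\<kappa> * (\<Sum>x\<in>UNIV. \<Sum>y\<in>UNIV. pmf (\<sigma> h) x * pmf (\<sigma>Y h) y * \<phi> x y)
             + l * (\<Sum>x\<in>UNIV. \<Sum>y\<in>UNIV. pmf (\<sigma> h) x * pmf (\<sigma>Y h) y * G (h @ [(x,y)]))
             = (\<Sum>x\<in>UNIV. \<Sum>y\<in>UNIV. pmf (\<sigma>Y h) y * (pmf (\<sigma> h) x * (\<kappa> * \<phi> x y + l * G (h @ [(x,y)]))))"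
            by (simp add: sum_distrib_left sum.distrib[symmetric] algebra_simps)
          also have "\<dots> = (\<Sum>y\<in>UNIV. \<Sum>x\<in>UNIV. pmf (\<sigma>Y h) y * (pmf (\<sigma> h) x * (\<kappa> * \<phi> x y + l * G (h @ [(x,y)]))))"
            by (rule sum.swap)
          also have "\<dots> = (\<Sum>y\<in>UNIV. pmf (\<sigma>Y h) y * (\<Sum>x\<in>UNIV. pmf (\<sigma> h) x * (\<kappa> * \<phi> x y + l * G (h @ [(x,y)]))))"
            by (simp add: sum_distrib_left)
          finally show ?thesis .
        qed
        also have "\<dots> = (\<Sum>y\<in>UNIV. pmf (\<sigma>Y h) y * G h)" by (simp add: ident)
        also have "\<dots> = G h" by (simp add: sum_distrib_right[symmetric] sum_pmf_eq_1)
        finally show "\<kappa> * (\<Sum>x\<in>UNIV. \<Sum>y\<in>UNIV. pmf (\<sigma> h) x * pmf (\<sigma>Y h) y * \<phi> x y)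
             + l * (\<Sum>x\<in>UNIV. \<Sum>y\<in>UNIV. pmf (\<sigma> h) x * pmf (\<sigma>Y h) y * G (h @ [(x,y)])) = G h" .
      qed
      finally show ?thesis by simp
    qed
    have ebnd: "\<bar>e t\<bar> \<le> B" for t unfolding e_def by (rule E_bound[OF bnd])
    have e0: "e 0 = G []" by (simp add: e_def)
    have tele: "\<kappa> * (\<Sum>t<N. l ^ t * stage_exp \<phi> \<sigma> \<sigma>Y t) = e 0 - l ^ N * e N" for N
    proof (induction N)
      case 0 then show ?case by simp
    next
      case (Suc N)
      have "\<kappa> * (\<Sum>t<Suc N. l ^ t * stage_exp \<phi> \<sigma> \<sigma>Y t) =
         \<kappa> * (\<Sum>t<N. l ^ t * stage_exp \<phi> \<sigma> \<sigma>Y t) + l ^ N * (\<kappa> * stage_exp \<phi> \<sigma> \<sigma>Y N)"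
        by (simp add: algebra_simps)
      also have "\<dots> = e 0 - l ^ Suc N * e (Suc N)"
      proof -
        have "l ^ N * (\<kappa> * stage_exp \<phi> \<sigma> \<sigma>Y N) = l ^ N * (e N - l * e (Suc N))" using step[of N] by simp
        then show ?thesis using Suc by (simp add: algebra_simps)
      qed
      finally show ?case .
    qed
    have "(if l < 1 then (1 - l) * (\<Sum>t. l ^ t * stage_exp \<phi> \<sigma> \<sigma>Y t) = 0
          else (\<lambda>T. (\<Sum>t\<le>T. stage_exp \<phi> \<sigma> \<sigma>Y t) / real (T + 1)) \<longlonglongrightarrow> 0)"
    proof (cases "l < 1")
      case True
      have "(\<lambda>N. l ^ N * e N) \<longlonglongrightarrow> 0"
      proof (rule Lim_null_comparison[where g="\<lambda>N. l ^ N * B"])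
        show "\<forall>\<^sub>F N in sequentially. norm (l ^ N * e N) \<le> l ^ N * B"
          using ebnd l by (intro always_eventually allI) (simp add: abs_mult mult_left_mono)
        show "(\<lambda>N. l ^ N * B) \<longlonglongrightarrow> 0"
          using True l by (intro tendsto_mult_left_zero LIMSEQ_power_zero) auto
      qed
      then have "(\<lambda>N. (e 0 - l ^ N * e N) / \<kappa>) \<longlonglongrightarrow> (e 0 - 0) / \<kappa>"
        using \<kappa> by (intro tendsto_intros) auto
      moreover have "(\<lambda>N. (e 0 - l ^ N * e N) / \<kappa>) = (\<lambda>N. \<Sum>t<N. l ^ t * stage_exp \<phi> \<sigma> \<sigma>Y t)"
        using tele \<kappa> by (auto simp: field_simps)
      ultimately have "(\<lambda>t. l ^ t * stage_exp \<phi> \<sigma> \<sigma>Y t) sums 0"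
        using e0 G0[OF True] by (simp add: sums_def)
      then show ?thesis using True by (simp add: sums_iff)
    next
      case False
      then have l1: "l = 1" using l by simp
      have "(\<lambda>T. (\<Sum>t\<le>T. stage_exp \<phi> \<sigma> \<sigma>Y t) / real (T + 1)) \<longlonglongrightarrow> 0"
      proof (rule Lim_null_comparison[where g="\<lambda>T. (2 * B / \<kappa>) / real (T + 1)"])
        have "norm ((\<Sum>t\<le>T. stage_exp \<phi> \<sigma> \<sigma>Y t) / real (T + 1)) \<le> (2 * B / \<kappa>) / real (T + 1)" for T
        proof -
          have "\<kappa> * (\<Sum>t\<le>T. stage_exp \<phi> \<sigma> \<sigma>Y t) = e 0 - e (Suc T)"
            using tele[of "Suc T"] l1 by (simp add: lessThan_Suc_atMost)
          moreover have "\<bar>e 0 - e (Suc T)\<bar> \<le> 2 * B" using ebnd[of 0] ebnd[of "Suc T"] by linarith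
          ultimately have "\<bar>(\<Sum>t\<le>T. stage_exp \<phi> \<sigma> \<sigma>Y t)\<bar> \<le> 2 * B / \<kappa>"
            using \<kappa> by (simp add: field_simps abs_mult)
          then have "\<bar>(\<Sum>t\<le>T. stage_exp \<phi> \<sigma> \<sigma>Y t)\<bar> / real (T + 1) \<le> (2 * B / \<kappa>) / real (T + 1)"
            by (intro divide_right_mono) auto
          then show ?thesis by simp
        qed
        then show "\<forall>\<^sub>F T in sequentially. norm ((\<Sum>t\<le>T. stage_exp \<phi> \<sigma> \<sigma>Y t) / real (T + 1)) \<le> (2 * B / \<kappa>) / real (T + 1)"
          by simp
        show "(\<lambda>T. (2 * B / \<kappa>) / real (T + 1)) \<longlonglongrightarrow> 0"
          using LIMSEQ_Suc[OF lim_const_over_n[of "2 * B / \<kappa>"]] by simp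
      qed
      then show ?thesis using False by simp
    qed
  }
  then show ?thesis unfolding autocratic_def by (cases "l < 1") auto
qed




lemma pmf_mix:
  assumes "0 \<le> p" "p \<le> 1"
  shows "pmf (mix_pmf p \<tau>p \<tau>m) x = p * pmf \<tau>p x + (1 - p) * pmf \<tau>m x"
proof -
  have "pmf (mix_pmf p \<tau>p \<tau>m) x = (\<Sum>c\<in>UNIV. pmf (bernoulli_pmf p) c * pmf (if c then \<tau>p else \<tau>m) x)"
    unfolding mix_pmf_def pmf_bind by (rule E_UNIV)
  also have "\<dots> = p * pmf \<tau>p x + (1 - p) * pmf \<tau>m x"
    using assms by (simp add: UNIV_bool)
  finally show ?thesis .
qed

lemma mix_inj:
  assumes "\<tau>p \<noteq> \<tau>m" "p \<in> {0..1}" "q \<in> {0..1}" "mix_pmf p \<tau>p \<tau>m = mix_pmf q \<tau>p \<tau>m"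
  shows "p = q"
proof -
  have "\<exists>x. pmf \<tau>p x \<noteq> pmf \<tau>m x"
  proof (rule ccontr)
    assume "\<not> (\<exists>x. pmf \<tau>p x \<noteq> pmf \<tau>m x)"
    then have "\<tau>p = \<tau>m" by (intro pmf_eqI) simp
    with assms(1) show False by simp
  qed
  then obtain x where x: "pmf \<tau>p x \<noteq> pmf \<tau>m x" by blast
  have "p * pmf \<tau>p x + (1 - p) * pmf \<tau>m x = q * pmf \<tau>p x + (1 - q) * pmf \<tau>m x"
    using assms(2-4) pmf_mix[of p \<tau>p \<tau>m x] pmf_mix[of q \<tau>p \<tau>m x] by auto
  then have "(p - q) * (pmf \<tau>p x - pmf \<tau>m x) = 0" by (simp add: algebra_simps)
  then show ?thesis using x by simp
qed

lemma mix_same: "mix_pmf p \<tau> \<tau> = \<tau>"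
  unfolding mix_pmf_def by (simp add: bind_pmf_const)

lemma E_mix:
  fixes \<phi> :: "'x::finite \<Rightarrow> 'y \<Rightarrow> real"
  assumes "0 \<le> p" "p \<le> 1"
  shows "(\<Sum>x\<in>UNIV. pmf (mix_pmf p \<tau>p \<tau>m) x * \<phi> x y) =
    p * (\<Sum>x\<in>UNIV. pmf \<tau>p x * \<phi> x y) + (1 - p) * (\<Sum>x\<in>UNIV. pmf \<tau>m x * \<phi> x y)"
  using assms unfolding pmf_mix[OF assms] by (simp only: distrib_right sum.distrib sum_distrib_left mult.assoc)

lemma equalizer_case:
  fixes \<phi> :: "'x::finite \<Rightarrow> 'y::finite \<Rightarrow> real"
  assumes "\<forall>y. (\<Sum>x\<in>UNIV. pmf \<tau> x * \<phi> x y) = 0" "0 \<le> l" "l \<le> 1"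
  shows "\<exists>(\<sigma>0 :: 'x pmf) (\<sigma>s :: 'x pmf \<Rightarrow> 'y \<Rightarrow> 'x pmf).
           two_point \<sigma>0 \<sigma>s \<and> autocratic \<phi> l (reactive_strategy \<sigma>0 \<sigma>s)"
proof -
  define \<sigma>s :: "'x pmf \<Rightarrow> 'y \<Rightarrow> 'x pmf" where "\<sigma>s = (\<lambda>t y. t)"
  have tp: "two_point \<tau> \<sigma>s"
    unfolding two_point_def \<sigma>s_def
    by (rule exI[of _ \<tau>], rule exI[of _ \<tau>], rule exI[of _ 0], rule exI[of _ "\<lambda>p b. 0"]) (simp add: mix_same)
  have rs: "reactive_strategy \<tau> \<sigma>s h = \<tau>" for h :: "('x,'y) history"
    unfolding reactive_strategy_def \<sigma>s_def by (induction h rule: rev_induct) simp_all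
  have "autocratic \<phi> l (\<lambda>h. \<tau>)"
    by (rule suff[where \<kappa>=1 and G="\<lambda>h. 0" and B=0]) (use assms in simp_all)
  moreover have "reactive_strategy \<tau> \<sigma>s = (\<lambda>h. \<tau>)" using rs by auto
  ultimately have "autocratic \<phi> l (reactive_strategy \<tau> \<sigma>s)" by simp
  then show ?thesis using tp by blast
qed




lemma construct:
  fixes \<phi> :: "'x::finite \<Rightarrow> 'y::finite \<Rightarrow> real"
  assumes neq: "\<tau>p \<noteq> \<tau>m" and l: "0 < l" "l \<le> 1" and Mm: "0 \<le> M" "0 \<le> m" "0 < M + m"
    and ha: "\<And>y. (1 - l) * M \<le> (\<Sum>x\<in>UNIV. pmf \<tau>p x * \<phi> x y) \<and> (\<Sum>x\<in>UNIV. pmf \<tau>p x * \<phi> x y) \<le> M + l * m"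
    and hb: "\<And>y. (1 - l) * m \<le> - (\<Sum>x\<in>UNIV. pmf \<tau>m x * \<phi> x y) \<and> - (\<Sum>x\<in>UNIV. pmf \<tau>m x * \<phi> x y) \<le> m + l * M"
  shows "\<exists>(\<sigma>0 :: 'x pmf) (\<sigma>s :: 'x pmf \<Rightarrow> 'y \<Rightarrow> 'x pmf).
           two_point \<sigma>0 \<sigma>s \<and> autocratic \<phi> l (reactive_strategy \<sigma>0 \<sigma>s)"
proof -
  define a where "a y = (\<Sum>x\<in>UNIV. pmf \<tau>p x * \<phi> x y)" for y
  define b where "b y = (\<Sum>x\<in>UNIV. pmf \<tau>m x * \<phi> x y)" for y
  define V where "V p = - m + p * (M + m)" for p :: real
  define u where "u p y = p * a y + (1 - p) * b y" for p y
  define ps where "ps p y = (m + (V p - u p y) / l) / (M + m)" for p y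
  define p0 where "p0 = m / (M + m)"
  define \<sigma>s :: "'x pmf \<Rightarrow> 'y \<Rightarrow> 'x pmf"
    where "\<sigma>s \<tau> y = mix_pmf (ps (THE p. p \<in> {0..1} \<and> \<tau> = mix_pmf p \<tau>p \<tau>m) y) \<tau>p \<tau>m" for \<tau> y
  define pst :: "('x,'y) history \<Rightarrow> real" where "pst h = foldl (\<lambda>p ab. ps p (snd ab)) p0 h" for h
  have lV: "l * V (ps p y) = V p - u p y" for p y
  proof -
    have "ps p y * (M + m) = m + (V p - u p y) / l" using Mm by (simp add: ps_def)
    then have "V (ps p y) = (V p - u p y) / l" by (simp add: V_def)
    then show ?thesis using l by simp
  qed
  have ps_range: "ps p y \<in> {0..1}" if p: "p \<in> {0..1}" for p y
  proof -
    have D: "V p - u p y = (1 - p) * (- m - b y) + p * (M - a y)"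
      unfolding V_def u_def by (simp add: algebra_simps)
    have X: "- l * m \<le> - m - b y" "- m - b y \<le> l * M" using hb[of y] unfolding b_def by (auto simp: algebra_simps)
    have Y: "- l * m \<le> M - a y" "M - a y \<le> l * M" using ha[of y] unfolding a_def by (auto simp: algebra_simps)
    have p01: "0 \<le> p" "0 \<le> 1 - p" using p by auto
    have "(1 - p) * (- l * m) \<le> (1 - p) * (- m - b y)" "p * (- l * m) \<le> p * (M - a y)"
      "(1 - p) * (- m - b y) \<le> (1 - p) * (l * M)" "p * (M - a y) \<le> p * (l * M)"
      using mult_left_mono[OF X(1) p01(2)] mult_left_mono[OF Y(1) p01(1)]
        mult_left_mono[OF X(2) p01(2)] mult_left_mono[OF Y(2) p01(1)] by simp_all
    then have Db: "- l * m \<le> V p - u p y" "V p - u p y \<le> l * M" unfolding D by (auto simp: algebra_simps)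
    then have "- m \<le> (V p - u p y) / l" "(V p - u p y) / l \<le> M" using l by (auto simp: field_simps)
    then show ?thesis unfolding ps_def using Mm by (auto simp: field_simps)
  qed
  have p0r: "p0 \<in> {0..1}" unfolding p0_def using Mm by (auto simp: field_simps)
  have \<sigma>s_mix: "\<sigma>s (mix_pmf p \<tau>p \<tau>m) y = mix_pmf (ps p y) \<tau>p \<tau>m" if "p \<in> {0..1}" for p y
  proof -
    have "(THE q. q \<in> {0..1} \<and> mix_pmf p \<tau>p \<tau>m = mix_pmf q \<tau>p \<tau>m) = p"
      using that mix_inj[OF neq] by (intro the_equality) auto
    then show ?thesis unfolding \<sigma>s_def by simp
  qed
  have pst_range: "pst h \<in> {0..1}" for h
    unfolding pst_def by (induction h rule: rev_induct) (use p0r ps_range in auto)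
  have rs: "reactive_strategy (mix_pmf p0 \<tau>p \<tau>m) \<sigma>s h = mix_pmf (pst h) \<tau>p \<tau>m" for h
  proof (induction h rule: rev_induct)
    case Nil then show ?case by (simp add: reactive_strategy_def pst_def)
  next
    case (snoc ab h)
    have "reactive_strategy (mix_pmf p0 \<tau>p \<tau>m) \<sigma>s (h @ [ab]) = \<sigma>s (reactive_strategy (mix_pmf p0 \<tau>p \<tau>m) \<sigma>s h) (snd ab)"
      by (simp add: reactive_strategy_def)
    also have "\<dots> = mix_pmf (ps (pst h) (snd ab)) \<tau>p \<tau>m" using snoc \<sigma>s_mix pst_range by simp
    also have "\<dots> = mix_pmf (pst (h @ [ab])) \<tau>p \<tau>m" by (simp add: pst_def)
    finally show ?case .
  qed
  have tp: "two_point (mix_pmf p0 \<tau>p \<tau>m) \<sigma>s"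
    unfolding two_point_def
    by (rule exI[of _ \<tau>p], rule exI[of _ \<tau>m], rule exI[of _ p0], rule exI[of _ ps]) (use p0r ps_range \<sigma>s_mix in auto)
  have Vb: "\<bar>V (pst h)\<bar> \<le> M + m" for h
  proof -
    have "0 \<le> pst h" "pst h \<le> 1" using pst_range[of h] by auto
    then have A: "pst h * (M + m) \<le> 1 * (M + m)" "0 \<le> pst h * (M + m)" using Mm
      by (intro mult_right_mono; simp) (use Mm \<open>0 \<le> pst h\<close> in simp)
    then show ?thesis unfolding V_def using Mm by (simp only: abs_le_iff) (smt (verit))
  qed
  have "autocratic \<phi> l (\<lambda>h. mix_pmf (pst h) \<tau>p \<tau>m)"
  proof (rule suff[where \<kappa>=1 and G="\<lambda>h. V (pst h)" and B="M + m"])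
    show "0 \<le> l" "l \<le> 1" "(0::real) < 1" using l by auto
    show "\<bar>V (pst h)\<bar> \<le> M + m" for h by (rule Vb)
    show "V (pst []) = 0" unfolding pst_def V_def p0_def using Mm by simp
    fix h :: "('x,'y) history" and y
    have P: "0 \<le> pst h" "pst h \<le> 1" using pst_range[of h] by auto
    have "(\<Sum>x\<in>UNIV. pmf (mix_pmf (pst h) \<tau>p \<tau>m) x * (1 * \<phi> x y + l * V (pst (h @ [(x, y)]))))
      = (\<Sum>x\<in>UNIV. pmf (mix_pmf (pst h) \<tau>p \<tau>m) x * \<phi> x y)
        + (\<Sum>x\<in>UNIV. pmf (mix_pmf (pst h) \<tau>p \<tau>m) x) * (l * V (ps (pst h) y))"
      by (simp add: pst_def sum.distrib sum_distrib_right distrib_left)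
    also have "\<dots> = u (pst h) y + l * V (ps (pst h) y)"
      using E_mix[OF P, of \<tau>p \<tau>m \<phi> y] by (simp add: sum_pmf_eq_1 u_def a_def b_def)
    also have "\<dots> = V (pst h)" by (simp add: lV)
    finally show "(\<Sum>x\<in>UNIV. pmf (mix_pmf (pst h) \<tau>p \<tau>m) x * (1 * \<phi> x y + l * V (pst (h @ [(x, y)])))) = V (pst h)" .
  qed
  moreover have "reactive_strategy (mix_pmf p0 \<tau>p \<tau>m) \<sigma>s = (\<lambda>h. mix_pmf (pst h) \<tau>p \<tau>m)"
    using rs by auto
  ultimately have "autocratic \<phi> l (reactive_strategy (mix_pmf p0 \<tau>p \<tau>m) \<sigma>s)" by simp
  then show ?thesis using tp by blast
qed




definition shift :: "(('x,'y) history \<Rightarrow> 'a) \<Rightarrow> ('x \<times> 'y) \<Rightarrow> ('x,'y) history \<Rightarrow> 'a" where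
  "shift \<sigma> xy = (\<lambda>g. \<sigma> (xy # g))"

lemma play_decomp:
  "play_pmf \<sigma> \<sigma>Y (Suc t) = bind_pmf (\<sigma> []) (\<lambda>x. bind_pmf (\<sigma>Y []) (\<lambda>y.
      map_pmf ((#) (x,y)) (play_pmf (shift \<sigma> (x,y)) (shift \<sigma>Y (x,y)) t)))"
proof (induction t)
  case 0 then show ?case by (simp add: bind_return_pmf)
next
  case (Suc t)
  show ?case
    apply (subst play_pmf.simps(2))
    apply (subst Suc)
    apply (simp add: bind_assoc_pmf map_bind_pmf bind_map_pmf bind_return_pmf shift_def)
    done
qed

lemma E_bind_UNIV:
  fixes p :: "'a::finite pmf" and h :: "'b \<Rightarrow> real"
  assumes "\<And>x. finite (set_pmf (f x))"
  shows "measure_pmf.expectation (bind_pmf p f) h = (\<Sum>a\<in>UNIV. pmf p a * measure_pmf.expectation (f a) h)"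
  using pmf_expectation_bind[of UNIV f p h] assms by simp

lemma stage_0:
  fixes \<sigma> :: "('x::finite, 'y::finite) history \<Rightarrow> 'x pmf"
  shows "stage_exp \<phi> \<sigma> \<sigma>Y 0 = (\<Sum>x\<in>UNIV. \<Sum>y\<in>UNIV. pmf (\<sigma> []) x * pmf (\<sigma>Y []) y * \<phi> x y)"
  by (simp add: stage_formula)

lemma stage_Suc:
  fixes \<sigma> :: "('x::finite, 'y::finite) history \<Rightarrow> 'x pmf"
  shows "stage_exp \<phi> \<sigma> \<sigma>Y (Suc t) = (\<Sum>x\<in>UNIV. \<Sum>y\<in>UNIV. pmf (\<sigma> []) x * pmf (\<sigma>Y []) y *
           stage_exp \<phi> (shift \<sigma> (x,y)) (shift \<sigma>Y (x,y)) t)"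
proof -
  have fin: "finite (set_pmf (map_pmf ((#) (x,y)) (play_pmf (shift \<sigma> (x,y)) (shift \<sigma>Y (x,y)) (Suc t))))" for x y
    by (simp add: finite_play)
  have fin2: "finite (set_pmf (bind_pmf (\<sigma>Y []) (\<lambda>y. map_pmf ((#) (x,y)) (play_pmf (shift \<sigma> (x,y)) (shift \<sigma>Y (x,y)) (Suc t)))))" for x
    by (intro finite_set_bind_pmf fin) simp
  have inner: "measure_pmf.expectation (map_pmf ((#) (x,y)) (play_pmf (shift \<sigma> (x,y)) (shift \<sigma>Y (x,y)) (Suc t)))
        (\<lambda>h. case last h of (a, b) \<Rightarrow> \<phi> a b) = stage_exp \<phi> (shift \<sigma> (x,y)) (shift \<sigma>Y (x,y)) t" for x y
  proof -
    have "measure_pmf.expectation (map_pmf ((#) (x,y)) (play_pmf (shift \<sigma> (x,y)) (shift \<sigma>Y (x,y)) (Suc t)))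
        (\<lambda>h. case last h of (a, b) \<Rightarrow> \<phi> a b) =
        measure_pmf.expectation (play_pmf (shift \<sigma> (x,y)) (shift \<sigma>Y (x,y)) (Suc t))
        (\<lambda>h. case last ((x,y) # h) of (a, b) \<Rightarrow> \<phi> a b)" by simp
    also have "\<dots> = measure_pmf.expectation (play_pmf (shift \<sigma> (x,y)) (shift \<sigma>Y (x,y)) (Suc t))
        (\<lambda>h. case last h of (a, b) \<Rightarrow> \<phi> a b)"
      unfolding E_finite[OF finite_play]
      by (intro sum.cong refl) (auto dest!: length_play)
    finally show ?thesis by (simp add: stage_exp_def)
  qed
  show ?thesis
    unfolding stage_exp_def[of \<phi> \<sigma>] play_decomp[of \<sigma> \<sigma>Y "Suc t"]
    apply (subst E_bind_UNIV[OF fin2])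
    apply (subst E_bind_UNIV[OF fin])
    apply (simp only: inner)
    apply (simp add: sum_distrib_left mult.assoc del: play_pmf.simps)
    done
qed




definition Kphi :: "('x::finite \<Rightarrow> 'y::finite \<Rightarrow> real) \<Rightarrow> real" where
  "Kphi \<phi> = (\<Sum>x\<in>UNIV. \<Sum>y\<in>UNIV. \<bar>\<phi> x y\<bar>)"

lemma phi_le_K: "\<bar>\<phi> x y\<bar> \<le> Kphi \<phi>"
proof -
  have "\<bar>\<phi> x y\<bar> \<le> (\<Sum>y\<in>UNIV. \<bar>\<phi> x y\<bar>)" by (rule member_le_sum) auto
  also have "\<dots> \<le> Kphi \<phi>" unfolding Kphi_def by (rule member_le_sum[of x _ "\<lambda>x. \<Sum>y\<in>UNIV. \<bar>\<phi> x y\<bar>"]) (auto intro: sum_nonneg)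
  finally show ?thesis .
qed

lemma K_nonneg: "0 \<le> Kphi \<phi>" using phi_le_K[of \<phi>] by (meson abs_ge_zero order_trans)

lemma stage_bound:
  fixes \<sigma> :: "('x::finite, 'y::finite) history \<Rightarrow> 'x pmf"
  shows "\<bar>stage_exp \<phi> \<sigma> \<sigma>Y t\<bar> \<le> Kphi \<phi>"
  unfolding stage_exp_def by (rule E_bound) (auto simp: phi_le_K split: prod.split)

definition Val :: "('x::finite \<Rightarrow> 'y::finite \<Rightarrow> real) \<Rightarrow> real \<Rightarrow> (('x, 'y) history \<Rightarrow> 'x pmf)
   \<Rightarrow> (('x, 'y) history \<Rightarrow> 'y pmf) \<Rightarrow> real" where
  "Val \<phi> l \<sigma> \<sigma>Y = (\<Sum>t. l ^ t * stage_exp \<phi> \<sigma> \<sigma>Y t)"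

lemma summable_Val:
  fixes \<sigma> :: "('x::finite, 'y::finite) history \<Rightarrow> 'x pmf"
  assumes "0 \<le> l" "l < 1"
  shows "summable (\<lambda>t. l ^ t * stage_exp \<phi> \<sigma> \<sigma>Y t)"
proof (rule summable_comparison_test'[where g="\<lambda>t. Kphi \<phi> * l ^ t" and N=0])
  show "summable (\<lambda>t. Kphi \<phi> * l ^ t)" using assms by (intro summable_mult summable_geometric) auto
  show "norm (l ^ t * stage_exp \<phi> \<sigma> \<sigma>Y t) \<le> Kphi \<phi> * l ^ t" for t
    using mult_left_mono[OF stage_bound[of \<phi> \<sigma> \<sigma>Y t], of "l ^ t"] assms by (simp add: abs_mult mult.commute)
qed

lemma Val_bound:
  fixes \<sigma> :: "('x::finite, 'y::finite) history \<Rightarrow> 'x pmf"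
  assumes "0 \<le> l" "l < 1"
  shows "\<bar>Val \<phi> l \<sigma> \<sigma>Y\<bar> \<le> Kphi \<phi> / (1 - l)"
proof -
  have g: "summable (\<lambda>t. Kphi \<phi> * l ^ t)" using assms by (intro summable_mult summable_geometric) auto
  have gs: "(\<Sum>t. Kphi \<phi> * l ^ t) = Kphi \<phi> / (1 - l)"
    using assms by (simp add: suminf_mult suminf_geometric summable_geometric divide_simps)
  have b: "\<bar>l ^ t * stage_exp \<phi> \<sigma> \<sigma>Y t\<bar> \<le> Kphi \<phi> * l ^ t" for t
    using mult_left_mono[OF stage_bound[of \<phi> \<sigma> \<sigma>Y t], of "l ^ t"] assms by (simp add: abs_mult mult.commute)
  have "Val \<phi> l \<sigma> \<sigma>Y \<le> (\<Sum>t. Kphi \<phi> * l ^ t)"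
    unfolding Val_def using b by (intro suminf_le summable_Val assms g) (auto simp: abs_le_iff)
  moreover have "- Val \<phi> l \<sigma> \<sigma>Y \<le> (\<Sum>t. Kphi \<phi> * l ^ t)"
    unfolding Val_def suminf_minus[OF summable_Val[OF assms], symmetric]
    using b by (intro suminf_le summable_minus summable_Val assms g) (auto simp: abs_le_iff)
  ultimately show ?thesis using gs by auto
qed

lemma Val_decomp:
  fixes \<sigma> :: "('x::finite, 'y::finite) history \<Rightarrow> 'x pmf"
  assumes l: "0 \<le> l" "l < 1"
  shows "Val \<phi> l \<sigma> \<sigma>Y = (\<Sum>x\<in>UNIV. \<Sum>y\<in>UNIV. pmf (\<sigma> []) x * pmf (\<sigma>Y []) y *
            (\<phi> x y + l * Val \<phi> l (shift \<sigma> (x,y)) (shift \<sigma>Y (x,y))))"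
proof -
  define f where "f t = l ^ t * stage_exp \<phi> \<sigma> \<sigma>Y t" for t
  have sf: "summable f" unfolding f_def by (rule summable_Val[OF l])
  have fS: "f (Suc n) = (\<Sum>x\<in>UNIV. \<Sum>y\<in>UNIV. (l * pmf (\<sigma> []) x * pmf (\<sigma>Y []) y) *
        (l ^ n * stage_exp \<phi> (shift \<sigma> (x,y)) (shift \<sigma>Y (x,y)) n))" for n
    unfolding f_def stage_Suc by (simp add: sum_distrib_left mult_ac)
  have "(\<Sum>n. f (Suc n)) = (\<Sum>x\<in>UNIV. \<Sum>y\<in>UNIV. (l * pmf (\<sigma> []) x * pmf (\<sigma>Y []) y) *
        Val \<phi> l (shift \<sigma> (x,y)) (shift \<sigma>Y (x,y)))"
    unfolding fS Val_def
    apply (subst suminf_sum)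
     apply (intro summable_sum summable_mult summable_Val[OF l])
    apply (subst suminf_sum)
     apply (intro summable_mult summable_Val[OF l])
    apply (simp add: suminf_mult summable_Val[OF l])
    done
  moreover have "Val \<phi> l \<sigma> \<sigma>Y = f 0 + (\<Sum>n. f (Suc n))"
    unfolding Val_def f_def[symmetric] using suminf_split_head[OF sf] by simp
  moreover have "f 0 = (\<Sum>x\<in>UNIV. \<Sum>y\<in>UNIV. pmf (\<sigma> []) x * pmf (\<sigma>Y []) y * \<phi> x y)"
    by (simp add: f_def stage_0)
  ultimately show ?thesis
    by (simp add: sum.distrib[symmetric] algebra_simps)
qed




lemma Val_return:
  fixes \<sigma> :: "('x::finite, 'y::finite) history \<Rightarrow> 'x pmf"
  assumes l: "0 \<le> l" "l < 1" and r: "\<sigma>Y [] = return_pmf y0"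
  shows "Val \<phi> l \<sigma> \<sigma>Y = (\<Sum>x\<in>UNIV. pmf (\<sigma> []) x *
            (\<phi> x y0 + l * Val \<phi> l (shift \<sigma> (x,y0)) (shift \<sigma>Y (x,y0))))"
proof -
  have "Val \<phi> l \<sigma> \<sigma>Y = (\<Sum>x\<in>UNIV. \<Sum>y\<in>UNIV. (if y = y0 then pmf (\<sigma> []) x *
            (\<phi> x y + l * Val \<phi> l (shift \<sigma> (x,y)) (shift \<sigma>Y (x,y))) else 0))"
    apply (subst Val_decomp[OF l])
    apply (unfold r)
    apply (intro sum.cong refl)
    apply (simp add: pmf_return indicator_def)
    done
  also have "\<dots> = (\<Sum>x\<in>UNIV. pmf (\<sigma> []) x *
            (\<phi> x y0 + l * Val \<phi> l (shift \<sigma> (x,y0)) (shift \<sigma>Y (x,y0))))"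
    by (simp add: sum.delta')
  finally show ?thesis .
qed

definition eqz :: "('x::finite \<Rightarrow> 'y::finite \<Rightarrow> real) \<Rightarrow> real \<Rightarrow> (('x, 'y) history \<Rightarrow> 'x pmf) \<Rightarrow> bool" where
  "eqz \<phi> l \<sigma> \<longleftrightarrow> (\<forall>\<sigma>Y \<sigma>Y'. Val \<phi> l \<sigma> \<sigma>Y = Val \<phi> l \<sigma> \<sigma>Y')"

lemma eqz_shift:
  fixes \<sigma> :: "('x::finite, 'y::finite) history \<Rightarrow> 'x pmf"
  assumes l: "0 < l" "l < 1" and e: "eqz \<phi> l \<sigma>" and p: "0 < pmf (\<sigma> []) x0"
  shows "eqz \<phi> l (shift \<sigma> (x0,y0))"
proof -
  {
    fix \<sigma>1 \<sigma>2 :: "('x,'y) history \<Rightarrow> 'y pmf"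
    define Y where "Y \<sigma>i = (\<lambda>h. if h = [] then return_pmf y0 else if hd h = (x0,y0) then \<sigma>i (tl h) else \<sigma>1 (tl h))" for \<sigma>i :: "('x,'y) history \<Rightarrow> 'y pmf"
    have shY: "shift (Y \<sigma>i) (x,y0) = (if x = x0 then \<sigma>i else \<sigma>1)" for \<sigma>i x
      unfolding Y_def shift_def by auto
    have Y0: "Y \<sigma>i [] = return_pmf y0" for \<sigma>i unfolding Y_def by simp
    have "Val \<phi> l \<sigma> (Y \<sigma>1) = Val \<phi> l \<sigma> (Y \<sigma>2)" using e unfolding eqz_def by blast
    then have "(\<Sum>x\<in>UNIV. pmf (\<sigma> []) x * (\<phi> x y0 + l * Val \<phi> l (shift \<sigma> (x,y0)) (if x = x0 then \<sigma>1 else \<sigma>1)))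
        = (\<Sum>x\<in>UNIV. pmf (\<sigma> []) x * (\<phi> x y0 + l * Val \<phi> l (shift \<sigma> (x,y0)) (if x = x0 then \<sigma>2 else \<sigma>1)))"
      unfolding Val_return[where \<sigma>Y="Y \<sigma>1", OF less_imp_le[OF l(1)] l(2) Y0[of \<sigma>1]]
        Val_return[where \<sigma>Y="Y \<sigma>2", OF less_imp_le[OF l(1)] l(2) Y0[of \<sigma>2]] shY .
    moreover have "(\<Sum>x\<in>UNIV. pmf (\<sigma> []) x * l * (Val \<phi> l (shift \<sigma> (x,y0)) (if x = x0 then \<sigma>1 else \<sigma>1)
        - Val \<phi> l (shift \<sigma> (x,y0)) (if x = x0 then \<sigma>2 else \<sigma>1))) =
        (\<Sum>x\<in>UNIV. pmf (\<sigma> []) x * (\<phi> x y0 + l * Val \<phi> l (shift \<sigma> (x,y0)) (if x = x0 then \<sigma>1 else \<sigma>1)))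
        - (\<Sum>x\<in>UNIV. pmf (\<sigma> []) x * (\<phi> x y0 + l * Val \<phi> l (shift \<sigma> (x,y0)) (if x = x0 then \<sigma>2 else \<sigma>1)))"
      unfolding sum_subtractf[symmetric] by (intro sum.cong refl) (simp add: algebra_simps)
    ultimately have "(\<Sum>x\<in>UNIV. pmf (\<sigma> []) x * l * (Val \<phi> l (shift \<sigma> (x,y0)) (if x = x0 then \<sigma>1 else \<sigma>1)
        - Val \<phi> l (shift \<sigma> (x,y0)) (if x = x0 then \<sigma>2 else \<sigma>1))) = 0"
      by simp
    moreover have "(\<Sum>x\<in>UNIV. pmf (\<sigma> []) x * l * (Val \<phi> l (shift \<sigma> (x,y0)) (if x = x0 then \<sigma>1 else \<sigma>1)
        - Val \<phi> l (shift \<sigma> (x,y0)) (if x = x0 then \<sigma>2 else \<sigma>1))) =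
        (\<Sum>x\<in>UNIV. if x = x0 then pmf (\<sigma> []) x0 * l * (Val \<phi> l (shift \<sigma> (x0,y0)) \<sigma>1 - Val \<phi> l (shift \<sigma> (x0,y0)) \<sigma>2) else 0)"
      by (intro sum.cong refl) auto
    ultimately have "pmf (\<sigma> []) x0 * l * (Val \<phi> l (shift \<sigma> (x0,y0)) \<sigma>1 - Val \<phi> l (shift \<sigma> (x0,y0)) \<sigma>2) = 0"
      by (simp add: sum.delta')
    then have "Val \<phi> l (shift \<sigma> (x0,y0)) \<sigma>1 = Val \<phi> l (shift \<sigma> (x0,y0)) \<sigma>2" using p l by simp
  }
  then show ?thesis unfolding eqz_def by blast
qed

inductive_set reach :: "(('x, 'y) history \<Rightarrow> 'x pmf) \<Rightarrow> (('x, 'y) history \<Rightarrow> 'x pmf) set" for \<sigma>X where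
  base: "\<sigma>X \<in> reach \<sigma>X"
| step: "\<sigma> \<in> reach \<sigma>X \<Longrightarrow> 0 < pmf (\<sigma> []) x \<Longrightarrow> shift \<sigma> (x,y) \<in> reach \<sigma>X"

lemma reach_eqz:
  fixes \<sigma>X :: "('x::finite, 'y::finite) history \<Rightarrow> 'x pmf"
  assumes l: "0 < l" "l < 1" and e: "eqz \<phi> l \<sigma>X" and r: "\<sigma> \<in> reach \<sigma>X"
  shows "eqz \<phi> l \<sigma>"
  using r by induction (use e eqz_shift[OF l] in auto)

lemma one_step:
  fixes \<sigma> :: "('x::finite, 'y::finite) history \<Rightarrow> 'x pmf"
  assumes l: "0 < l" "l < 1" and e: "eqz \<phi> l \<sigma>X" and r: "\<sigma> \<in> reach \<sigma>X"
  shows "Val \<phi> l \<sigma> \<sigma>Y = (\<Sum>x\<in>UNIV. pmf (\<sigma> []) x * \<phi> x y) +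
      l * (\<Sum>x\<in>UNIV. pmf (\<sigma> []) x * Val \<phi> l (shift \<sigma> (x,y)) \<sigma>Y')"
proof -
  define Y where "Y = (\<lambda>h::('x,'y) history. if h = [] then return_pmf y else \<sigma>Y' (tl h))"
  have "Val \<phi> l \<sigma> \<sigma>Y = Val \<phi> l \<sigma> Y" using reach_eqz[OF l e r] unfolding eqz_def by blast
  also have "\<dots> = (\<Sum>x\<in>UNIV. pmf (\<sigma> []) x * (\<phi> x y + l * Val \<phi> l (shift \<sigma> (x,y)) \<sigma>Y'))"
  proof -
    have "shift Y (x,y) = \<sigma>Y'" for x unfolding Y_def shift_def by auto
    then show ?thesis using Val_return[OF less_imp_le[OF l(1)] l(2), of Y y \<phi> \<sigma>] unfolding Y_def by simp
  qed
  also have "\<dots> = (\<Sum>x\<in>UNIV. pmf (\<sigma> []) x * \<phi> x y) +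
      l * (\<Sum>x\<in>UNIV. pmf (\<sigma> []) x * Val \<phi> l (shift \<sigma> (x,y)) \<sigma>Y')"
    by (simp add: sum.distrib sum_distrib_left algebra_simps)
  finally show ?thesis .
qed




lemma pmf_from_vec:
  fixes w :: "real ^ 'x::finite"
  assumes "\<And>i. 0 \<le> w $ i" "(\<Sum>i\<in>UNIV. w $ i) = 1"
  shows "\<exists>\<tau>::'x pmf. \<forall>x. pmf \<tau> x = w $ x"
proof -
  have "(\<integral>\<^sup>+x. ennreal (w $ x) \<partial>count_space UNIV) = 1"
    using assms by (simp add: nn_integral_count_space_finite)
  then show ?thesis using pmf_embed_pmf[of "\<lambda>x. w $ x"] assms(1) by blast
qed

lemma compact_pmf:
  fixes \<phi> :: "'x::finite \<Rightarrow> 'y \<Rightarrow> real"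
  assumes "\<And>\<epsilon>. \<epsilon> > 0 \<Longrightarrow> \<exists>\<tau>::'x pmf. \<forall>y. L y - \<epsilon> \<le> (\<Sum>x\<in>UNIV. pmf \<tau> x * \<phi> x y) \<and> (\<Sum>x\<in>UNIV. pmf \<tau> x * \<phi> x y) \<le> U y + \<epsilon>"
  shows "\<exists>\<tau>::'x pmf. \<forall>y. L y \<le> (\<Sum>x\<in>UNIV. pmf \<tau> x * \<phi> x y) \<and> (\<Sum>x\<in>UNIV. pmf \<tau> x * \<phi> x y) \<le> U y"
proof -
  have "\<forall>n::nat. \<exists>\<tau>::'x pmf. \<forall>y. L y - 1 / real (Suc n) \<le> (\<Sum>x\<in>UNIV. pmf \<tau> x * \<phi> x y) \<and> (\<Sum>x\<in>UNIV. pmf \<tau> x * \<phi> x y) \<le> U y + 1 / real (Suc n)"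
  proof
    fix n :: nat
    have "1 / real (Suc n) > 0" by simp
    from assms[OF this] show "\<exists>\<tau>::'x pmf. \<forall>y. L y - 1 / real (Suc n) \<le> (\<Sum>x\<in>UNIV. pmf \<tau> x * \<phi> x y) \<and> (\<Sum>x\<in>UNIV. pmf \<tau> x * \<phi> x y) \<le> U y + 1 / real (Suc n)" .
  qed
  then obtain T :: "nat \<Rightarrow> 'x pmf" where T: "\<And>n y. L y - 1 / real (Suc n) \<le> (\<Sum>x\<in>UNIV. pmf (T n) x * \<phi> x y) \<and> (\<Sum>x\<in>UNIV. pmf (T n) x * \<phi> x y) \<le> U y + 1 / real (Suc n)"
    by (rule choice[THEN exE]) blast
  define v where "v n = (\<chi> x. pmf (T n) x)" for n
  have vin: "v n \<in> cball 0 1" for n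
  proof -
    have "norm (v n) \<le> (\<Sum>i\<in>UNIV. \<bar>v n $ i\<bar>)" by (rule norm_le_l1_cart)
    also have "\<dots> = (\<Sum>i\<in>UNIV. pmf (T n) i)" by (simp add: v_def)
    also have "\<dots> = 1" by (simp add: sum_pmf_eq_1)
    finally show ?thesis by simp
  qed
  have sc: "seq_compact (cball (0::real^'x) 1)" by (rule compact_imp_seq_compact[OF compact_cball])
  obtain w r where "w \<in> cball 0 1" and r: "strict_mono (r :: nat \<Rightarrow> nat)" and lim: "(v \<circ> r) \<longlonglongrightarrow> w"
    using seq_compactE[OF sc, of v] vin by blast
  have limi: "(\<lambda>n. pmf (T (r n)) i) \<longlonglongrightarrow> w $ i" for i
    using tendsto_vec_nth[OF lim, of i] by (simp add: v_def o_def)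
  have w0: "0 \<le> w $ i" for i
    by (rule LIMSEQ_le_const[OF limi]) (simp add: pmf_nonneg)
  have "(\<lambda>n. \<Sum>i\<in>UNIV. pmf (T (r n)) i) \<longlonglongrightarrow> (\<Sum>i\<in>UNIV. w $ i)"
    by (intro tendsto_sum limi)
  moreover have "(\<lambda>n. \<Sum>i\<in>UNIV. pmf (T (r n)) i) = (\<lambda>n. 1)" by (simp add: sum_pmf_eq_1)
  ultimately have "(\<lambda>n. 1::real) \<longlonglongrightarrow> (\<Sum>i\<in>UNIV. w $ i)" by simp
  then have w1: "(\<Sum>i\<in>UNIV. w $ i) = 1" using LIMSEQ_unique[OF tendsto_const] by metis
  obtain \<tau> :: "'x pmf" where \<tau>: "\<And>x. pmf \<tau> x = w $ x" using pmf_from_vec[OF w0 w1] by blast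
  have eps: "(\<lambda>n. 1 / real (Suc (r n))) \<longlonglongrightarrow> 0"
  proof -
    have "(\<lambda>n. 1 / real (Suc n)) \<longlonglongrightarrow> 0" using LIMSEQ_Suc[OF lim_const_over_n[of 1]] by simp
    from LIMSEQ_subseq_LIMSEQ[OF this r] show ?thesis by (simp add: o_def)
  qed
  have "L y \<le> (\<Sum>x\<in>UNIV. pmf \<tau> x * \<phi> x y) \<and> (\<Sum>x\<in>UNIV. pmf \<tau> x * \<phi> x y) \<le> U y" for y
  proof -
    have S: "(\<lambda>n. \<Sum>x\<in>UNIV. pmf (T (r n)) x * \<phi> x y) \<longlonglongrightarrow> (\<Sum>x\<in>UNIV. pmf \<tau> x * \<phi> x y)"
      unfolding \<tau> by (intro tendsto_intros limi)
    have A: "(\<lambda>n. L y - 1 / real (Suc (r n))) \<longlonglongrightarrow> L y - 0" by (intro tendsto_intros eps)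
    have B: "(\<lambda>n. U y + 1 / real (Suc (r n))) \<longlonglongrightarrow> U y + 0" by (intro tendsto_intros eps)
    have "L y - 0 \<le> (\<Sum>x\<in>UNIV. pmf \<tau> x * \<phi> x y)"
      by (rule LIMSEQ_le[OF A S]) (use T in auto)
    moreover have "(\<Sum>x\<in>UNIV. pmf \<tau> x * \<phi> x y) \<le> U y + 0"
      by (rule LIMSEQ_le[OF S B]) (use T in auto)
    ultimately show ?thesis by simp
  qed
  then show ?thesis by blast
qed




lemma nec_lt1:
  fixes \<sigma>X :: "('x::finite, 'y::finite) history \<Rightarrow> 'x pmf" and \<phi> :: "'x \<Rightarrow> 'y \<Rightarrow> real"
  assumes l: "0 < l" "l < 1" and aut: "\<And>\<sigma>Y. Val \<phi> l \<sigma>X \<sigma>Y = 0"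
  shows "\<exists>(\<tau>p::'x pmf) (\<tau>m::'x pmf) M m. 0 \<le> M \<and> 0 \<le> m \<and>
     (\<forall>y. (1 - l) * M \<le> (\<Sum>x\<in>UNIV. pmf \<tau>p x * \<phi> x y) \<and> (\<Sum>x\<in>UNIV. pmf \<tau>p x * \<phi> x y) \<le> M + l * m) \<and>
     (\<forall>y. (1 - l) * m \<le> - (\<Sum>x\<in>UNIV. pmf \<tau>m x * \<phi> x y) \<and> - (\<Sum>x\<in>UNIV. pmf \<tau>m x * \<phi> x y) \<le> m + l * M)"
proof -
  have e: "eqz \<phi> l \<sigma>X" using aut unfolding eqz_def by simp
  define Y0 :: "('x,'y) history \<Rightarrow> 'y pmf" where "Y0 = (\<lambda>_. return_pmf undefined)"
  define c where "c \<sigma> = Val \<phi> l \<sigma> Y0" for \<sigma>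
  define C where "C = c ` reach \<sigma>X"
  have Cne: "C \<noteq> {}" unfolding C_def using reach.base by blast
  have Cb: "\<bar>z\<bar> \<le> Kphi \<phi> / (1 - l)" if "z \<in> C" for z
    using that Val_bound[of l \<phi>] l unfolding C_def c_def by auto
  have ba: "bdd_above C" using Cb by (intro bdd_aboveI[of _ "Kphi \<phi> / (1 - l)"]) (auto simp: abs_le_iff)
  have bb: "bdd_below C"
  proof (rule bdd_belowI[of _ "- (Kphi \<phi> / (1 - l))"])
    fix z assume "z \<in> C" then have "\<bar>z\<bar> \<le> Kphi \<phi> / (1 - l)" by (rule Cb)
    then show "- (Kphi \<phi> / (1 - l)) \<le> z" by linarith
  qed
  define Ws where "Ws = Sup C"
  define Wi where "Wi = Inf C"
  have c0: "c \<sigma>X = 0" unfolding c_def by (rule aut)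
  have "0 \<in> C" unfolding C_def using c0 reach.base by force
  then have Ws0: "0 \<le> Ws" and Wi0: "Wi \<le> 0" unfolding Ws_def Wi_def
    using cSup_upper[OF _ ba] cInf_lower[OF _ bb] by auto
  have inC: "\<sigma> \<in> reach \<sigma>X \<Longrightarrow> Wi \<le> c \<sigma> \<and> c \<sigma> \<le> Ws" for \<sigma>
    unfolding Ws_def Wi_def C_def using cSup_upper[OF _ ba] cInf_lower[OF _ bb] C_def by auto
  have key: "(\<Sum>x\<in>UNIV. pmf (\<sigma> []) x * \<phi> x y) = c \<sigma> - l * S \<and> Wi \<le> S \<and> S \<le> Ws"
    if r: "\<sigma> \<in> reach \<sigma>X" and S: "S = (\<Sum>x\<in>UNIV. pmf (\<sigma> []) x * c (shift \<sigma> (x,y)))" for \<sigma> y S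
  proof -
    have "c \<sigma> = (\<Sum>x\<in>UNIV. pmf (\<sigma> []) x * \<phi> x y) + l * S"
      unfolding S c_def by (rule one_step[OF l e r])
    moreover have "S \<le> (\<Sum>x\<in>UNIV. pmf (\<sigma> []) x * Ws)" unfolding S
    proof (intro sum_mono)
      fix x
      show "pmf (\<sigma> []) x * c (shift \<sigma> (x, y)) \<le> pmf (\<sigma> []) x * Ws"
      proof (cases "pmf (\<sigma> []) x > 0")
        case True then show ?thesis using inC[OF reach.step[OF r True]] by (intro mult_left_mono) auto
      next
        case False then have "pmf (\<sigma> []) x = 0" using pmf_nonneg[of "\<sigma> []" x] by linarith
        then show ?thesis by simp
      qed
    qed
    moreover have "(\<Sum>x\<in>UNIV. pmf (\<sigma> []) x * Wi) \<le> S" unfolding S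
    proof (intro sum_mono)
      fix x
      show "pmf (\<sigma> []) x * Wi \<le> pmf (\<sigma> []) x * c (shift \<sigma> (x, y))"
      proof (cases "pmf (\<sigma> []) x > 0")
        case True then show ?thesis using inC[OF reach.step[OF r True]] by (intro mult_left_mono) auto
      next
        case False then have "pmf (\<sigma> []) x = 0" using pmf_nonneg[of "\<sigma> []" x] by linarith
        then show ?thesis by simp
      qed
    qed
    moreover have "(\<Sum>x\<in>UNIV. pmf (\<sigma> []) x * W) = W" for W
      by (simp add: sum_distrib_right[symmetric] sum_pmf_eq_1)
    ultimately show ?thesis by simp
  qed
  define M where "M = Ws"
  define m where "m = - Wi"
  have P: "\<exists>\<tau>::'x pmf. \<forall>y. (1 - l) * M \<le> (\<Sum>x\<in>UNIV. pmf \<tau> x * \<phi> x y) \<and> (\<Sum>x\<in>UNIV. pmf \<tau> x * \<phi> x y) \<le> M + l * m"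
  proof (rule compact_pmf)
    fix \<epsilon> :: real assume \<epsilon>: "\<epsilon> > 0"
    have "Ws - \<epsilon> < Sup C" using \<epsilon> unfolding Ws_def by simp
    then obtain z where "z \<in> C" "Ws - \<epsilon> < z" using less_cSup_iff[OF Cne ba] by blast
    then obtain \<sigma> where r: "\<sigma> \<in> reach \<sigma>X" and cs: "Ws - \<epsilon> < c \<sigma>" unfolding C_def by blast
    have "(1 - l) * M - \<epsilon> \<le> (\<Sum>x\<in>UNIV. pmf (\<sigma> []) x * \<phi> x y) \<and> (\<Sum>x\<in>UNIV. pmf (\<sigma> []) x * \<phi> x y) \<le> M + l * m + \<epsilon>" for y
    proof -
      obtain S where S: "S = (\<Sum>x\<in>UNIV. pmf (\<sigma> []) x * c (shift \<sigma> (x,y)))" by blast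
      note k = key[OF r S]
      have "l * S \<le> l * Ws" "l * Wi \<le> l * S" using k l by (auto intro: mult_left_mono)
      then show ?thesis using k inC[OF r] cs unfolding M_def m_def by (simp add: algebra_simps)
    qed
    then show "\<exists>\<tau>::'x pmf. \<forall>y. (1 - l) * M - \<epsilon> \<le> (\<Sum>x\<in>UNIV. pmf \<tau> x * \<phi> x y) \<and> (\<Sum>x\<in>UNIV. pmf \<tau> x * \<phi> x y) \<le> M + l * m + \<epsilon>"
      by blast
  qed
  have Q: "\<exists>\<tau>::'x pmf. \<forall>y. (1 - l) * m \<le> (\<Sum>x\<in>UNIV. pmf \<tau> x * - \<phi> x y) \<and> (\<Sum>x\<in>UNIV. pmf \<tau> x * - \<phi> x y) \<le> m + l * M"
  proof (rule compact_pmf)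
    fix \<epsilon> :: real assume \<epsilon>: "\<epsilon> > 0"
    have "Inf C < Wi + \<epsilon>" using \<epsilon> unfolding Wi_def by simp
    then obtain z where "z \<in> C" "z < Wi + \<epsilon>" using cInf_less_iff[OF Cne bb] by blast
    then obtain \<sigma> where r: "\<sigma> \<in> reach \<sigma>X" and cs: "c \<sigma> < Wi + \<epsilon>" unfolding C_def by blast
    have "(1 - l) * m - \<epsilon> \<le> (\<Sum>x\<in>UNIV. pmf (\<sigma> []) x * - \<phi> x y) \<and> (\<Sum>x\<in>UNIV. pmf (\<sigma> []) x * - \<phi> x y) \<le> m + l * M + \<epsilon>" for y
    proof -
      obtain S where S: "S = (\<Sum>x\<in>UNIV. pmf (\<sigma> []) x * c (shift \<sigma> (x,y)))" by blast
      note k = key[OF r S]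
      have "l * S \<le> l * Ws" "l * Wi \<le> l * S" using k l by (auto intro: mult_left_mono)
      moreover have "(\<Sum>x\<in>UNIV. pmf (\<sigma> []) x * - \<phi> x y) = - (\<Sum>x\<in>UNIV. pmf (\<sigma> []) x * \<phi> x y)"
        by (simp add: sum_negf)
      ultimately show ?thesis using k inC[OF r] cs unfolding M_def m_def by (simp add: algebra_simps)
    qed
    then show "\<exists>\<tau>::'x pmf. \<forall>y. (1 - l) * m - \<epsilon> \<le> (\<Sum>x\<in>UNIV. pmf \<tau> x * - \<phi> x y) \<and> (\<Sum>x\<in>UNIV. pmf \<tau> x * - \<phi> x y) \<le> m + l * M + \<epsilon>"
      by blast
  qed
  obtain \<tau>p where tp: "\<forall>y. (1 - l) * M \<le> (\<Sum>x\<in>UNIV. pmf \<tau>p x * \<phi> x y) \<and> (\<Sum>x\<in>UNIV. pmf \<tau>p x * \<phi> x y) \<le> M + l * m"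
    using P by blast
  obtain \<tau>m where tm: "\<forall>y. (1 - l) * m \<le> (\<Sum>x\<in>UNIV. pmf \<tau>m x * - \<phi> x y) \<and> (\<Sum>x\<in>UNIV. pmf \<tau>m x * - \<phi> x y) \<le> m + l * M"
    using Q by blast
  have neg: "(\<Sum>x\<in>UNIV. pmf \<tau>m x * - \<phi> x y) = - (\<Sum>x\<in>UNIV. pmf \<tau>m x * \<phi> x y)" for y
    by (simp add: sum_negf)
  have "0 \<le> M" "0 \<le> m" using Ws0 Wi0 unfolding M_def m_def by auto
  then show ?thesis using tp tm unfolding neg by blast
qed




lemma pay_le_K:
  fixes \<phi> :: "'x::finite \<Rightarrow> 'y::finite \<Rightarrow> real"
  shows "(\<Sum>x\<in>UNIV. pmf \<tau> x * \<phi> x y) \<le> Kphi \<phi>"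
proof -
  have "(\<Sum>x\<in>UNIV. pmf \<tau> x * \<phi> x y) \<le> (\<Sum>x\<in>UNIV. pmf \<tau> x * Kphi \<phi>)"
    by (intro sum_mono mult_left_mono) (auto intro: order_trans[OF abs_ge_self phi_le_K])
  also have "\<dots> = Kphi \<phi>" by (simp add: sum_distrib_right[symmetric] sum_pmf_eq_1)
  finally show ?thesis .
qed

lemma nec_1:
  fixes \<sigma>X :: "('x::finite, 'y::finite) history \<Rightarrow> 'x pmf" and \<phi> :: "'x \<Rightarrow> 'y \<Rightarrow> real"
  assumes aut: "\<And>\<sigma>Y. (\<lambda>T. (\<Sum>t\<le>T. stage_exp \<phi> \<sigma>X \<sigma>Y t) / real (T + 1)) \<longlonglongrightarrow> 0"
  shows "\<exists>\<tau>::'x pmf. \<forall>y. 0 \<le> (\<Sum>x\<in>UNIV. pmf \<tau> x * \<phi> x y) \<and> (\<Sum>x\<in>UNIV. pmf \<tau> x * \<phi> x y) \<le> Kphi \<phi>"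
proof (rule compact_pmf)
  fix \<epsilon> :: real assume \<epsilon>: "\<epsilon> > 0"
  show "\<exists>\<tau>::'x pmf. \<forall>y. 0 - \<epsilon> \<le> (\<Sum>x\<in>UNIV. pmf \<tau> x * \<phi> x y) \<and> (\<Sum>x\<in>UNIV. pmf \<tau> x * \<phi> x y) \<le> Kphi \<phi> + \<epsilon>"
  proof (rule ccontr)
    assume neg: "\<not> ?thesis"
    have br: "\<exists>y. (\<Sum>x\<in>UNIV. pmf \<tau> x * \<phi> x y) < - \<epsilon>" for \<tau> :: "'x pmf"
    proof -
      from neg obtain y where y: "\<not> (0 - \<epsilon> \<le> (\<Sum>x\<in>UNIV. pmf \<tau> x * \<phi> x y) \<and> (\<Sum>x\<in>UNIV. pmf \<tau> x * \<phi> x y) \<le> Kphi \<phi> + \<epsilon>)"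
        by blast
      have "(\<Sum>x\<in>UNIV. pmf \<tau> x * \<phi> x y) \<le> Kphi \<phi>" by (rule pay_le_K)
      with y \<epsilon> have "(\<Sum>x\<in>UNIV. pmf \<tau> x * \<phi> x y) < - \<epsilon>" by linarith
      then show ?thesis by blast
    qed
    define b where "b \<tau> = (SOME y. (\<Sum>x\<in>UNIV. pmf \<tau> x * \<phi> x y) < - \<epsilon>)" for \<tau>
    have bb: "(\<Sum>x\<in>UNIV. pmf \<tau> x * \<phi> x (b \<tau>)) < - \<epsilon>" for \<tau>
      unfolding b_def by (rule someI_ex[OF br])
    define Y :: "('x,'y) history \<Rightarrow> 'y pmf" where "Y h = return_pmf (b (\<sigma>X h))" for h
    have st: "stage_exp \<phi> \<sigma>X Y t \<le> - \<epsilon>" for t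
    proof -
      have eq: "(\<Sum>x\<in>UNIV. \<Sum>y\<in>UNIV. pmf (\<sigma>X h) x * pmf (Y h) y * \<phi> x y) = (\<Sum>x\<in>UNIV. pmf (\<sigma>X h) x * \<phi> x (b (\<sigma>X h)))" for h
      proof -
        have "(\<Sum>x\<in>UNIV. \<Sum>y\<in>UNIV. pmf (\<sigma>X h) x * pmf (Y h) y * \<phi> x y) =
          (\<Sum>x\<in>UNIV. \<Sum>y\<in>UNIV. if y = b (\<sigma>X h) then pmf (\<sigma>X h) x * \<phi> x y else 0)"
          unfolding Y_def by (intro sum.cong refl) (simp add: pmf_return indicator_def)
        then show ?thesis by (simp add: sum.delta')
      qed
      have "stage_exp \<phi> \<sigma>X Y t = (\<Sum>h\<in>set_pmf (play_pmf \<sigma>X Y t). pmf (play_pmf \<sigma>X Y t) h * (\<Sum>x\<in>UNIV. pmf (\<sigma>X h) x * \<phi> x (b (\<sigma>X h))))"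
        unfolding stage_formula E_finite[OF finite_play] eq ..
      also have "\<dots> \<le> (\<Sum>h\<in>set_pmf (play_pmf \<sigma>X Y t). pmf (play_pmf \<sigma>X Y t) h * - \<epsilon>)"
        by (intro sum_mono mult_left_mono) (use bb less_imp_le in auto)
      also have "\<dots> = (\<Sum>h\<in>set_pmf (play_pmf \<sigma>X Y t). pmf (play_pmf \<sigma>X Y t) h) * - \<epsilon>"
        by (rule sum_distrib_right[symmetric])
      also have "\<dots> = - \<epsilon>" by (simp add: sum_pmf_eq_1 finite_play)
      finally show ?thesis .
    qed
    have "(\<Sum>t\<le>T. stage_exp \<phi> \<sigma>X Y t) / real (T + 1) \<le> - \<epsilon>" for T
    proof -
      have "(\<Sum>t\<le>T. stage_exp \<phi> \<sigma>X Y t) \<le> (\<Sum>t\<le>T. - \<epsilon>)" by (intro sum_mono st)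
      also have "\<dots> = - \<epsilon> * real (T + 1)" by simp
      finally show ?thesis by (simp add: divide_simps)
    qed
    then have "0 \<le> - \<epsilon>" by (intro LIMSEQ_le_const2[OF aut[of Y]]) auto
    with \<epsilon> show False by simp
  qed
qed

lemma stage_neg: "stage_exp (\<lambda>x y. - \<phi> x y) \<sigma> \<sigma>Y t = - stage_exp \<phi> \<sigma> \<sigma>Y t"
  unfolding stage_exp_def by (simp add: case_prod_beta)

lemma K_neg: "Kphi (\<lambda>x y. - \<phi> x y) = Kphi \<phi>"
  by (simp add: Kphi_def)

lemma zero_pow_sum: "(\<Sum>t. (0::real) ^ t * f t) = f 0"
  using powser_zero[of f] by (simp add: mult.commute)

theorem proposition8:
  fixes \<phi> :: "'x::finite \<Rightarrow> 'y::finite \<Rightarrow> real" and lam :: real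
  assumes "0 \<le> lam" and "lam \<le> 1"
    and "\<exists>\<sigma>X :: ('x, 'y) history \<Rightarrow> 'x pmf. autocratic \<phi> lam \<sigma>X"
  shows "\<forall>lam'\<in>{lam..1}. \<exists>(\<sigma>0 :: 'x pmf) (\<sigma>s :: 'x pmf \<Rightarrow> 'y \<Rightarrow> 'x pmf).
           two_point \<sigma>0 \<sigma>s \<and> autocratic \<phi> lam' (reactive_strategy \<sigma>0 \<sigma>s)"
proof (cases "\<exists>\<tau>::'x pmf. \<forall>y. (\<Sum>x\<in>UNIV. pmf \<tau> x * \<phi> x y) = 0")
  case True
  then obtain \<tau> :: "'x pmf" where "\<forall>y. (\<Sum>x\<in>UNIV. pmf \<tau> x * \<phi> x y) = 0" by blast
  then show ?thesis using equalizer_case[of \<tau> \<phi>] assms(1) by auto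
next
  case noeq: False
  obtain \<sigma>X :: "('x, 'y) history \<Rightarrow> 'x pmf" where aut: "autocratic \<phi> lam \<sigma>X" using assms(3) by blast
  have lampos: "0 < lam"
  proof (rule ccontr)
    assume "\<not> 0 < lam"
    then have l0: "lam = 0" using assms(1) by simp
    have "stage_exp \<phi> \<sigma>X (\<lambda>_. return_pmf y) 0 = 0" for y
      using aut unfolding autocratic_def l0 by (simp add: zero_pow_sum)
    then have "(\<Sum>x\<in>UNIV. pmf (\<sigma>X []) x * \<phi> x y) = 0" for y
    proof -
      have "stage_exp \<phi> \<sigma>X (\<lambda>_. return_pmf y) 0 = (\<Sum>x\<in>UNIV. \<Sum>y'\<in>UNIV. if y' = y then pmf (\<sigma>X []) x * \<phi> x y' else 0)"
        unfolding stage_0 by (intro sum.cong refl) (simp add: pmf_return indicator_def)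
      also have "\<dots> = (\<Sum>x\<in>UNIV. pmf (\<sigma>X []) x * \<phi> x y)" by (simp add: sum.delta')
      finally show ?thesis using \<open>\<And>y. stage_exp \<phi> \<sigma>X (\<lambda>_. return_pmf y) 0 = 0\<close> by simp
    qed
    then show False using noeq by blast
  qed
  obtain \<tau>p \<tau>m :: "'x pmf" and M m where Mm: "0 \<le> M" "0 \<le> m"
    and ha: "\<forall>y. (1 - lam) * M \<le> (\<Sum>x\<in>UNIV. pmf \<tau>p x * \<phi> x y) \<and> (\<Sum>x\<in>UNIV. pmf \<tau>p x * \<phi> x y) \<le> M + lam * m"
    and hb: "\<forall>y. (1 - lam) * m \<le> - (\<Sum>x\<in>UNIV. pmf \<tau>m x * \<phi> x y) \<and> - (\<Sum>x\<in>UNIV. pmf \<tau>m x * \<phi> x y) \<le> m + lam * M"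
  proof (cases "lam < 1")
    case True
    have "Val \<phi> lam \<sigma>X \<sigma>Y = 0" for \<sigma>Y
      using aut True unfolding autocratic_def Val_def by simp
    from nec_lt1[OF lampos True this] show ?thesis using that by blast
  next
    case False
    then have l1: "lam = 1" using assms(2) by simp
    have a1: "(\<lambda>T. (\<Sum>t\<le>T. stage_exp \<phi> \<sigma>X \<sigma>Y t) / real (T + 1)) \<longlonglongrightarrow> 0" for \<sigma>Y
      using aut unfolding autocratic_def l1 by simp
    have a2: "(\<lambda>T. (\<Sum>t\<le>T. stage_exp (\<lambda>x y. - \<phi> x y) \<sigma>X \<sigma>Y t) / real (T + 1)) \<longlonglongrightarrow> 0" for \<sigma>Y
      using tendsto_minus[OF a1[of \<sigma>Y]] by (simp add: stage_neg sum_negf)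
    obtain \<tau>p :: "'x pmf" where tp: "\<forall>y. 0 \<le> (\<Sum>x\<in>UNIV. pmf \<tau>p x * \<phi> x y) \<and> (\<Sum>x\<in>UNIV. pmf \<tau>p x * \<phi> x y) \<le> Kphi \<phi>"
      using nec_1[OF a1] by blast
    obtain \<tau>m :: "'x pmf" where tm: "\<forall>y. 0 \<le> (\<Sum>x\<in>UNIV. pmf \<tau>m x * - \<phi> x y) \<and> (\<Sum>x\<in>UNIV. pmf \<tau>m x * - \<phi> x y) \<le> Kphi \<phi>"
      using nec_1[OF a2] unfolding K_neg by blast
    have neg: "(\<Sum>x\<in>UNIV. pmf \<tau>m x * - \<phi> x y) = - (\<Sum>x\<in>UNIV. pmf \<tau>m x * \<phi> x y)" for y
      by (simp add: sum_negf)
    have K0: "0 \<le> Kphi \<phi>" by (rule K_nonneg)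
    have A: "\<forall>y. (1 - lam) * Kphi \<phi> \<le> (\<Sum>x\<in>UNIV. pmf \<tau>p x * \<phi> x y) \<and> (\<Sum>x\<in>UNIV. pmf \<tau>p x * \<phi> x y) \<le> Kphi \<phi> + lam * Kphi \<phi>"
    proof
      fix y
      have "0 \<le> (\<Sum>x\<in>UNIV. pmf \<tau>p x * \<phi> x y) \<and> (\<Sum>x\<in>UNIV. pmf \<tau>p x * \<phi> x y) \<le> Kphi \<phi>" using tp by blast
      then show "(1 - lam) * Kphi \<phi> \<le> (\<Sum>x\<in>UNIV. pmf \<tau>p x * \<phi> x y) \<and> (\<Sum>x\<in>UNIV. pmf \<tau>p x * \<phi> x y) \<le> Kphi \<phi> + lam * Kphi \<phi>"
        using K0 l1 by simp
    qed
    have B: "\<forall>y. (1 - lam) * Kphi \<phi> \<le> - (\<Sum>x\<in>UNIV. pmf \<tau>m x * \<phi> x y) \<and> - (\<Sum>x\<in>UNIV. pmf \<tau>m x * \<phi> x y) \<le> Kphi \<phi> + lam * Kphi \<phi>"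
    proof
      fix y
      have "0 \<le> (\<Sum>x\<in>UNIV. pmf \<tau>m x * - \<phi> x y) \<and> (\<Sum>x\<in>UNIV. pmf \<tau>m x * - \<phi> x y) \<le> Kphi \<phi>" using tm by blast
      then show "(1 - lam) * Kphi \<phi> \<le> - (\<Sum>x\<in>UNIV. pmf \<tau>m x * \<phi> x y) \<and> - (\<Sum>x\<in>UNIV. pmf \<tau>m x * \<phi> x y) \<le> Kphi \<phi> + lam * Kphi \<phi>"
        unfolding neg using K0 l1 by simp
    qed
    show ?thesis by (rule that[OF K0 K0 A B])
  qed
  show ?thesis
  proof
    fix lam' assume lr: "lam' \<in> {lam..1}"
    have l': "0 < lam'" "lam' \<le> 1" "lam \<le> lam'" using lr lampos by auto
    have ha': "(1 - lam') * M \<le> (\<Sum>x\<in>UNIV. pmf \<tau>p x * \<phi> x y) \<and> (\<Sum>x\<in>UNIV. pmf \<tau>p x * \<phi> x y) \<le> M + lam' * m" for y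
    proof -
      have c: "(1 - lam') * M \<le> (1 - lam) * M" "lam * m \<le> lam' * m" using l' Mm by (auto intro: mult_right_mono)
      have h: "(1 - lam) * M \<le> (\<Sum>x\<in>UNIV. pmf \<tau>p x * \<phi> x y)" "(\<Sum>x\<in>UNIV. pmf \<tau>p x * \<phi> x y) \<le> M + lam * m"
        using ha by blast+
      show ?thesis using order_trans[OF c(1) h(1)] order_trans[OF h(2) add_left_mono[OF c(2)]] by simp
    qed
    have hb': "(1 - lam') * m \<le> - (\<Sum>x\<in>UNIV. pmf \<tau>m x * \<phi> x y) \<and> - (\<Sum>x\<in>UNIV. pmf \<tau>m x * \<phi> x y) \<le> m + lam' * M" for y
    proof -
      have c: "(1 - lam') * m \<le> (1 - lam) * m" "lam * M \<le> lam' * M" using l' Mm by (auto intro: mult_right_mono)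
      have h: "(1 - lam) * m \<le> - (\<Sum>x\<in>UNIV. pmf \<tau>m x * \<phi> x y)" "- (\<Sum>x\<in>UNIV. pmf \<tau>m x * \<phi> x y) \<le> m + lam * M"
        using hb by blast+
      show ?thesis using order_trans[OF c(1) h(1)] order_trans[OF h(2) add_left_mono[OF c(2)]] by simp
    qed
    have pos: "0 < M + m"
    proof (rule ccontr)
      assume "\<not> 0 < M + m"
      then have "M = 0" "m = 0" using Mm by auto
      have "\<forall>y. (\<Sum>x\<in>UNIV. pmf \<tau>p x * \<phi> x y) = 0"
      proof
        fix y
        have "(1 - lam) * M \<le> (\<Sum>x\<in>UNIV. pmf \<tau>p x * \<phi> x y)" "(\<Sum>x\<in>UNIV. pmf \<tau>p x * \<phi> x y) \<le> M + lam * m"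
          using ha by blast+
        then show "(\<Sum>x\<in>UNIV. pmf \<tau>p x * \<phi> x y) = 0" using \<open>M = 0\<close> \<open>m = 0\<close> by simp
      qed
      then show False using noeq by blast
    qed
    have neq: "\<tau>p \<noteq> \<tau>m"
    proof
      assume eq: "\<tau>p = \<tau>m"
      have "0 \<le> (1 - lam) * M" "0 \<le> (1 - lam) * m" using Mm assms(2) by auto
      have "\<forall>y. (\<Sum>x\<in>UNIV. pmf \<tau>p x * \<phi> x y) = 0"
      proof
        fix y
        have "(1 - lam) * M \<le> (\<Sum>x\<in>UNIV. pmf \<tau>p x * \<phi> x y)" "(1 - lam) * m \<le> - (\<Sum>x\<in>UNIV. pmf \<tau>p x * \<phi> x y)"
          using ha hb unfolding eq by blast+
        then show "(\<Sum>x\<in>UNIV. pmf \<tau>p x * \<phi> x y) = 0" using \<open>0 \<le> (1 - lam) * M\<close> \<open>0 \<le> (1 - lam) * m\<close> by linarith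
      qed
      then show False using noeq by blast
    qed
    show "\<exists>(\<sigma>0 :: 'x pmf) (\<sigma>s :: 'x pmf \<Rightarrow> 'y \<Rightarrow> 'x pmf).
           two_point \<sigma>0 \<sigma>s \<and> autocratic \<phi> lam' (reactive_strategy \<sigma>0 \<sigma>s)"
      by (rule construct[OF neq l'(1) l'(2) Mm pos ha' hb'])
  qed
qed


end
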